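(* Let $(A=\bigoplus_{k\ge1}A_k,\bullet_i,\Delta)$ be a preshuffle bialgebra, let $q\ge0$, and let $x_1,\dots,x_q,y,z\in A$ be homogeneous primitive elements ($\Delta$ vanishes on each). Then $L^p_q(x_1,\dots,x_q;y;z)$ is primitive for every $1\le p\le|y|$.
   Context: A preshuffle algebra is a graded vector space $A=\bigoplus_{n\ge0}A_n$ with linear maps $\bullet_i:A_n\otimes A_m\to A_{n+m}$ ($0\le i\le m$) such that $(x\bullet_iy)\bullet_jz=x\bullet_{i+j}(y\bullet_jz)$ for $0\le i\le|y|$, $0\le j\le|z|$ ($|\cdot|$ denotes degree). A preshuffle bialgebra is a preshuffle algebra with $A_0=0$ and a coassociative coproduct $\Delta$ with $\Delta(A_n)\subseteq\bigoplus_{i=1}^{n-1}A_i\otimes A_{n-i}$ (Sweedler notation $\Delta(z)=\sum z_{(1)}\otimes z_{(2)}$) such that for homogeneous $x,y$: (1) $\Delta(x\bullet_0y)=\sum x_{(1)}\otimes(x_{(2)}\bullet_0y)+x\otimes y+\sum(x\bullet_0y_{(1)})\otimes y_{(2)}$; (2) for $1\le i\le|y|-1$: $\Delta(x\bullet_iy)=\sum_{|y_{(1)}|\le i}y_{(1)}\otimes(x\bullet_{i-|y_{(1)}|}y_{(2)})+\sum_{|y_{(1)}|=i}(x_{(1)}\bullet_iy_{(1)})\otimes(x_{(2)}\bullet_0y_{(2)})+\sum_{|y_{(1)}|\ge i}(x\bullet_iy_{(1)})\otimes y_{(2)}$; (3) $\Delta(x\bullet_{|y|}y)=\sum y_{(1)}\otimes(x\bullet_{|y_{(2)}|}y_{(2)})+y\otimes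 x+\sum(x_{(1)}\bullet_{|y|}y)\otimes x_{(2)}$. The operations $L^p_q$: for $q=0$, $L^p_0(y;z)=z\bullet_py$ if $0<p<|y|$, and $L^{|y|}_0(y;z)=z\bullet_{|y|}y-y\bullet_0z$. For $q\ge1$, with $N=\sum_{k=1}^q|x_k|$ and $N'=\sum_{k=2}^q|x_k|$: $L^p_q(x_1,\dots,x_q;y;z)=z\bullet_{p+N}(x_1\bullet_0\cdots\bullet_0x_q\bullet_0y)-x_1\bullet_0\big(z\bullet_{p+N'}(x_2\bullet_0\cdots\bullet_0x_q\bullet_0y)\big)$ (the product $\bullet_0$ is associative). *)

theory Defs
  imports "HOL-Library.Poly_Mapping"
begin

text \<open>A graded vector space over a field 'k is modelled as the free vector space
  of finitely supported functions on a homogeneous basis 'b, with degree function deg on basis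
  elements. Tensor products are free vector spaces on pairs of basis elements.\<close>

definition smul :: "'k::field \<Rightarrow> ('b \<Rightarrow>\<^sub>0 'k) \<Rightarrow> ('b \<Rightarrow>\<^sub>0 'k)" where
  "smul c v = Poly_Mapping.map (\<lambda>a. c * a) v"

definition lin_ext :: "('b \<Rightarrow> ('c \<Rightarrow>\<^sub>0 'k::field)) \<Rightarrow> ('b \<Rightarrow>\<^sub>0 'k) \<Rightarrow> ('c \<Rightarrow>\<^sub>0 'k)" where
  "lin_ext f v = (\<Sum>b\<in>Poly_Mapping.keys v. smul (Poly_Mapping.lookup v b) (f b))"

abbreviation bas :: "'b \<Rightarrow> ('b \<Rightarrow>\<^sub>0 'k::field)" where
  "bas b \<equiv> Poly_Mapping.single b 1"

definition tens :: "('b \<Rightarrow>\<^sub>0 'k::field) \<Rightarrow> ('c \<Rightarrow>\<^sub>0 'k) \<Rightarrow> ('b \<times> 'c \<Rightarrow>\<^sub>0 'k)" where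
  "tens u v = lin_ext (\<lambda>a. lin_ext (\<lambda>b. Poly_Mapping.single (a, b) 1) v) u"

definition hom :: "('b \<Rightarrow> nat) \<Rightarrow> nat \<Rightarrow> ('b \<Rightarrow>\<^sub>0 'k::field) \<Rightarrow> bool" where
  "hom deg n v \<longleftrightarrow> (\<forall>b\<in>Poly_Mapping.keys v. deg b = n)"

text \<open>Degree |v| of a homogeneous element (0 for the zero vector; irrelevant there).\<close>
definition hdeg :: "('b \<Rightarrow> nat) \<Rightarrow> ('b \<Rightarrow>\<^sub>0 'k::field) \<Rightarrow> nat" where
  "hdeg deg v = (if v = 0 then 0 else deg (SOME b. b \<in> Poly_Mapping.keys v))"

definition bul :: "(nat \<Rightarrow> 'b \<Rightarrow> 'b \<Rightarrow> ('b \<Rightarrow>\<^sub>0 'k::field)) \<Rightarrow> nat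
    \<Rightarrow> ('b \<Rightarrow>\<^sub>0 'k) \<Rightarrow> ('b \<Rightarrow>\<^sub>0 'k) \<Rightarrow> ('b \<Rightarrow>\<^sub>0 'k)" where
  "bul bb i x y = lin_ext (\<lambda>a. lin_ext (\<lambda>b. bb i a b) y) x"

definition Delta :: "('b \<Rightarrow> ('b \<times> 'b \<Rightarrow>\<^sub>0 'k::field)) \<Rightarrow> ('b \<Rightarrow>\<^sub>0 'k) \<Rightarrow> ('b \<times> 'b \<Rightarrow>\<^sub>0 'k)" where
  "Delta cop v = lin_ext cop v"

definition preshuffle_bialgebra ::
  "('b \<Rightarrow> nat) \<Rightarrow> (nat \<Rightarrow> 'b \<Rightarrow> 'b \<Rightarrow> ('b \<Rightarrow>\<^sub>0 'k::field)) \<Rightarrow> ('b \<Rightarrow> ('b \<times> 'b \<Rightarrow>\<^sub>0 'k)) \<Rightarrow> bool"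
where
  "preshuffle_bialgebra deg bb cop \<longleftrightarrow>
     \<comment> \<open>A_0 = 0\<close>
     (\<forall>b. 0 < deg b) \<and>
     \<comment> \<open>\<bullet>_i maps A_n \<otimes> A_m to A_(n+m) for 0 \<le> i \<le> m\<close>
     (\<forall>i a b. i \<le> deg b \<longrightarrow> hom deg (deg a + deg b) (bb i a b)) \<and>
     \<comment> \<open>preshuffle associativity\<close>
     (\<forall>x y z n m l i j. hom deg n x \<and> hom deg m y \<and> hom deg l z \<and> i \<le> m \<and> j \<le> l \<longrightarrow>
        bul bb j (bul bb i x y) z = bul bb (i + j) x (bul bb j y z)) \<and>
     \<comment> \<open>\<Delta>(A_n) \<subseteq> \<Oplus>_{i=1}^{n-1} A_i \<otimes> A_(n-i) (with A_0 = 0)\<close>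
     (\<forall>b c d. (c, d) \<in> Poly_Mapping.keys (cop b) \<longrightarrow> deg c + deg d = deg b) \<and>
     \<comment> \<open>coassociativity (\<Delta> \<otimes> id)\<Delta> = (id \<otimes> \<Delta>)\<Delta>\<close>
     (\<forall>b. lin_ext (\<lambda>(c, d). lin_ext (\<lambda>(u, v). Poly_Mapping.single (u, v, d) 1) (cop c)) (cop b)
        = lin_ext (\<lambda>(c, d). lin_ext (\<lambda>(v, w). Poly_Mapping.single (c, v, w) 1) (cop d)) (cop b)) \<and>
     \<comment> \<open>compatibility (1)\<close>
     (\<forall>x y n m. hom deg n x \<and> hom deg m y \<longrightarrow>
        Delta cop (bul bb 0 x y) =
          lin_ext (\<lambda>(a, b). tens (bas a) (bul bb 0 (bas b) y)) (Delta cop x)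
          + tens x y
          + lin_ext (\<lambda>(c, d). tens (bul bb 0 x (bas c)) (bas d)) (Delta cop y)) \<and>
     \<comment> \<open>compatibility (2)\<close>
     (\<forall>x y n m i. hom deg n x \<and> hom deg m y \<and> 1 \<le> i \<and> i \<le> m - 1 \<longrightarrow>
        Delta cop (bul bb i x y) =
          lin_ext (\<lambda>(c, d). if deg c \<le> i then tens (bas c) (bul bb (i - deg c) x (bas d)) else 0)
            (Delta cop y)
          + lin_ext (\<lambda>(a, b). lin_ext (\<lambda>(c, d).
                if deg c = i then tens (bul bb i (bas a) (bas c)) (bul bb 0 (bas b) (bas d)) else 0)
              (Delta cop y)) (Delta cop x)
          + lin_ext (\<lambda>(c, d). if i \<le> deg c then tens (bul bb i x (bas c)) (bas d) else 0)
            (Delta cop y)) \<and>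
     \<comment> \<open>compatibility (3)\<close>
     (\<forall>x y n m. hom deg n x \<and> hom deg m y \<longrightarrow>
        Delta cop (bul bb m x y) =
          lin_ext (\<lambda>(c, d). tens (bas c) (bul bb (deg d) x (bas d))) (Delta cop y)
          + tens y x
          + lin_ext (\<lambda>(a, b). tens (bul bb m (bas a) y) (bas b)) (Delta cop x))"

definition chain0 :: "(nat \<Rightarrow> 'b \<Rightarrow> 'b \<Rightarrow> ('b \<Rightarrow>\<^sub>0 'k::field)) \<Rightarrow> ('b \<Rightarrow>\<^sub>0 'k) list
    \<Rightarrow> ('b \<Rightarrow>\<^sub>0 'k) \<Rightarrow> ('b \<Rightarrow>\<^sub>0 'k)" where
  "chain0 bb xs y = foldr (\<lambda>x acc. bul bb 0 x acc) xs y"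

definition Lop :: "('b \<Rightarrow> nat) \<Rightarrow> (nat \<Rightarrow> 'b \<Rightarrow> 'b \<Rightarrow> ('b \<Rightarrow>\<^sub>0 'k::field)) \<Rightarrow> nat
    \<Rightarrow> ('b \<Rightarrow>\<^sub>0 'k) list \<Rightarrow> ('b \<Rightarrow>\<^sub>0 'k) \<Rightarrow> ('b \<Rightarrow>\<^sub>0 'k) \<Rightarrow> ('b \<Rightarrow>\<^sub>0 'k)" where
  "Lop deg bb p xs y z =
     (case xs of
        [] \<Rightarrow> (if p = hdeg deg y then bul bb (hdeg deg y) z y - bul bb 0 y z
              else bul bb p z y)
      | x1 # xs' \<Rightarrow>
          bul bb (p + sum_list (map (hdeg deg) xs)) z (chain0 bb xs y)
          - bul bb 0 x1 (bul bb (p + sum_list (map (hdeg deg) xs')) z (chain0 bb xs' y)))"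

end

theory Submission
  imports Defs
begin


lemma lookup_smul[simp]: "Poly_Mapping.lookup (smul c v) b = c * Poly_Mapping.lookup v b"
  unfolding smul_def by (simp add: Poly_Mapping.map.rep_eq when_def)

lemma lookup_lin_ext_gen:
  assumes "finite S" "Poly_Mapping.keys v \<subseteq> S"
  shows "Poly_Mapping.lookup (lin_ext f v) x = (\<Sum>b\<in>S. Poly_Mapping.lookup v b * Poly_Mapping.lookup (f b) x)"
proof -
  have "Poly_Mapping.lookup (lin_ext f v) x = (\<Sum>b\<in>Poly_Mapping.keys v. Poly_Mapping.lookup v b * Poly_Mapping.lookup (f b) x)"
    unfolding lin_ext_def by (simp add: lookup_sum)
  also have "\<dots> = (\<Sum>b\<in>S. Poly_Mapping.lookup v b * Poly_Mapping.lookup (f b) x)"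
    using assms by (intro sum.mono_neutral_left) (auto simp: in_keys_iff)
  finally show ?thesis .
qed

lemma lookup_lin_ext: "Poly_Mapping.lookup (lin_ext f v) x = (\<Sum>b\<in>Poly_Mapping.keys v. Poly_Mapping.lookup v b * Poly_Mapping.lookup (f b) x)"
  by (rule lookup_lin_ext_gen) auto

lemma lin_ext_add: "lin_ext f (u + v) = lin_ext f u + lin_ext f v"
proof (rule poly_mapping_eqI)
  fix x
  let ?S = "Poly_Mapping.keys u \<union> Poly_Mapping.keys v"
  have "finite ?S" by simp
  moreover have "Poly_Mapping.keys (u+v) \<subseteq> ?S" by (rule keys_add)
  ultimately show "Poly_Mapping.lookup (lin_ext f (u + v)) x = Poly_Mapping.lookup (lin_ext f u + lin_ext f v) x"
    by (simp add: lookup_add lookup_lin_ext_gen[of ?S] distrib_right sum.distrib)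
qed

lemma lin_ext_minus: "lin_ext f (u - v) = lin_ext f u - lin_ext f v"
proof (rule poly_mapping_eqI)
  fix x
  let ?S = "Poly_Mapping.keys u \<union> Poly_Mapping.keys v"
  have "finite ?S" by simp
  moreover have "Poly_Mapping.keys (u-v) \<subseteq> ?S" by (auto simp: in_keys_iff lookup_minus)
  ultimately show "Poly_Mapping.lookup (lin_ext f (u - v)) x = Poly_Mapping.lookup (lin_ext f u - lin_ext f v) x"
    by (simp add: lookup_minus lookup_lin_ext_gen[of ?S] left_diff_distrib sum_subtractf)
qed

lemma lin_ext_0[simp]: "lin_ext f 0 = 0"
  unfolding lin_ext_def by simp

lemma lin_ext_zero_fun: "lin_ext (\<lambda>_. 0) v = 0"
  by (rule poly_mapping_eqI) (simp add: lookup_lin_ext)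

lemma lin_ext_cong: "(\<And>b. b \<in> Poly_Mapping.keys v \<Longrightarrow> f b = g b) \<Longrightarrow> lin_ext f v = lin_ext g v"
  unfolding lin_ext_def by simp

lemma lin_ext_bas[simp]: "lin_ext f (bas b) = f b"
  by (rule poly_mapping_eqI) (simp add: lookup_lin_ext)

lemma lin_ext_bas_id[simp]: "lin_ext bas v = v"
proof (rule poly_mapping_eqI)
  fix x
  show "Poly_Mapping.lookup (lin_ext bas v) x = Poly_Mapping.lookup v x"
  proof -
    have "Poly_Mapping.lookup (lin_ext bas v) x = (\<Sum>b\<in>Poly_Mapping.keys v. Poly_Mapping.lookup v b * (if b = x then 1 else 0))"
      by (simp add: lookup_lin_ext lookup_single when_def)
    also have "\<dots> = (\<Sum>b\<in>Poly_Mapping.keys v. if b = x then Poly_Mapping.lookup v b else 0)"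
      by (rule sum.cong) auto
    also have "\<dots> = Poly_Mapping.lookup v x" by (simp add: sum.delta' in_keys_iff)
    finally show ?thesis .
  qed
qed

lemma keys_lin_ext: "Poly_Mapping.keys (lin_ext f v) \<subseteq> (\<Union>b\<in>Poly_Mapping.keys v. Poly_Mapping.keys (f b))"
  by (auto simp: lookup_lin_ext in_keys_iff intro: ccontr dest: sum.not_neutral_contains_not_neutral)

lemma lin_ext_swap:
  "lin_ext (\<lambda>a. lin_ext (\<lambda>b. K a b) v) u = lin_ext (\<lambda>b. lin_ext (\<lambda>a. K a b) u) v"
  by (rule poly_mapping_eqI)
    (simp add: lookup_lin_ext sum_distrib_left mult.left_commute sum.swap[of _ "Poly_Mapping.keys u"])

lemma lin_ext_comp: "lin_ext f (lin_ext g v) = lin_ext (\<lambda>b. lin_ext f (g b)) v"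
proof (rule poly_mapping_eqI)
  fix x
  let ?S = "\<Union>b\<in>Poly_Mapping.keys v. Poly_Mapping.keys (g b)"
  have fin: "finite ?S" by simp
  have "Poly_Mapping.lookup (lin_ext f (lin_ext g v)) x
     = (\<Sum>c\<in>?S. Poly_Mapping.lookup (lin_ext g v) c * Poly_Mapping.lookup (f c) x)"
    by (rule lookup_lin_ext_gen[OF fin keys_lin_ext])
  also have "\<dots> = (\<Sum>c\<in>?S. (\<Sum>b\<in>Poly_Mapping.keys v. Poly_Mapping.lookup v b * Poly_Mapping.lookup (g b) c) * Poly_Mapping.lookup (f c) x)"
    by (simp add: lookup_lin_ext)
  also have "\<dots> = (\<Sum>b\<in>Poly_Mapping.keys v. Poly_Mapping.lookup v b * (\<Sum>c\<in>?S. Poly_Mapping.lookup (g b) c * Poly_Mapping.lookup (f c) x))"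
    by (simp add: sum_distrib_right sum_distrib_left mult.assoc sum.swap[of _ ?S])
  also have "\<dots> = (\<Sum>b\<in>Poly_Mapping.keys v. Poly_Mapping.lookup v b * Poly_Mapping.lookup (lin_ext f (g b)) x)"
    by (intro sum.cong refl arg_cong2[where f="(*)"] lookup_lin_ext_gen[symmetric] fin) auto
  also have "\<dots> = Poly_Mapping.lookup (lin_ext (\<lambda>b. lin_ext f (g b)) v) x"
    by (simp add: lookup_lin_ext)
  finally show "Poly_Mapping.lookup (lin_ext f (lin_ext g v)) x = Poly_Mapping.lookup (lin_ext (\<lambda>b. lin_ext f (g b)) v) x" .
qed


lemma tens_lin1: "tens (lin_ext F a) B = lin_ext (\<lambda>c. tens (F c) B) a"
  unfolding tens_def by (simp add: lin_ext_comp)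

lemma tens_lin2: "tens u (lin_ext G b) = lin_ext (\<lambda>d. tens u (G d)) b"
  unfolding tens_def by (simp add: lin_ext_comp lin_ext_swap[of _ u])

lemma tens_lin_ext:
  "lin_ext (\<lambda>(c, d). tens (F c) (G d)) (tens a b) = tens (lin_ext F a) (lin_ext G b)"
proof -
  have "lin_ext (\<lambda>(c, d). tens (F c) (G d)) (tens a b)
      = lin_ext (\<lambda>c. lin_ext (\<lambda>d. tens (F c) (G d)) b) a"
    unfolding tens_def[of a b] by (simp add: lin_ext_comp)
  also have "\<dots> = tens (lin_ext F a) (lin_ext G b)"
    by (simp add: tens_lin1) (simp add: tens_lin2)
  finally show ?thesis .
qed

lemma bul_bas2: "bul bb i z (bas d) = lin_ext (\<lambda>a. bb i a d) z"
  unfolding bul_def by simp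

lemma bul_lin2: "lin_ext (\<lambda>d. bul bb i z (bas d)) w = bul bb i z w"
  unfolding bul_bas2 by (simp add: lin_ext_swap[of _ w] bul_def)

lemma keys_bas[simp]: "Poly_Mapping.keys (bas b :: _ \<Rightarrow>\<^sub>0 'k::field) = {b}"
  by simp

lemma keys_tens:
  fixes a :: "'a \<Rightarrow>\<^sub>0 'k::field" and b :: "'c \<Rightarrow>\<^sub>0 'k"
  shows "Poly_Mapping.keys (tens a b) \<subseteq> Poly_Mapping.keys a \<times> Poly_Mapping.keys b"
proof
  fix k assume "k \<in> Poly_Mapping.keys (tens a b)"
  then obtain c where c: "c \<in> Poly_Mapping.keys a"
      and k: "k \<in> Poly_Mapping.keys (lin_ext (\<lambda>d. bas (c, d)) b)"
    unfolding tens_def using keys_lin_ext by fastforce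
  then obtain d where "d \<in> Poly_Mapping.keys b" "k \<in> Poly_Mapping.keys (bas (c, d) :: _ \<Rightarrow>\<^sub>0 'k)"
    using keys_lin_ext by fastforce
  then show "k \<in> Poly_Mapping.keys a \<times> Poly_Mapping.keys b" using c by simp
qed

lemma Delta_minus: "Delta cop (u - v) = Delta cop u - Delta cop v"
  unfolding Delta_def by (rule lin_ext_minus)

lemma hom_bas: "hom deg (deg b) (bas b :: _ \<Rightarrow>\<^sub>0 'k::field)"
  unfolding hom_def by simp

lemma hom_hdeg: assumes "hom deg n x" shows "hom deg (hdeg deg x) x"
proof (cases "x = 0")
  case True then show ?thesis by (simp add: hom_def)
next
  case False
  then have "\<exists>b. b \<in> Poly_Mapping.keys x" by (metis all_not_in_conv keys_eq_empty)
  then have "(SOME b. b \<in> Poly_Mapping.keys x) \<in> Poly_Mapping.keys x" by (rule someI_ex)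
  then have "hdeg deg x = n" using assms False by (simp add: hdeg_def hom_def)
  then show ?thesis using assms by simp
qed

lemma hom_bul:
  assumes ps: "preshuffle_bialgebra deg bb cop" and "hom deg n x" "hom deg m y" "i \<le> m"
  shows "hom deg (n + m) (bul bb i x y)"
  unfolding hom_def
proof
  fix k assume "k \<in> Poly_Mapping.keys (bul bb i x y)"
  then obtain a where a: "a \<in> Poly_Mapping.keys x" and k: "k \<in> Poly_Mapping.keys (lin_ext (\<lambda>b. bb i a b) y)"
    unfolding bul_def using keys_lin_ext by fastforce
  then obtain b where b: "b \<in> Poly_Mapping.keys y" and "k \<in> Poly_Mapping.keys (bb i a b)"
    using keys_lin_ext by fastforce
  moreover have "deg a = n" "deg b = m" using a b assms by (auto simp: hom_def)
  moreover have "hom deg (deg a + deg b) (bb i a b)" using ps assms \<open>deg b = m\<close>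
    unfolding preshuffle_bialgebra_def by auto
  ultimately show "deg k = n + m" by (auto simp: hom_def)
qed

lemma chain0_Nil[simp]: "chain0 bb [] y = y"
  by (simp add: chain0_def)

lemma chain0_Cons[simp]: "chain0 bb (x # xs) y = bul bb 0 x (chain0 bb xs y)"
  by (simp add: chain0_def)

lemma hom_chain:
  assumes ps: "preshuffle_bialgebra deg bb cop" and "\<forall>x\<in>set xs. \<exists>n. hom deg n x" and "hom deg m y"
  shows "hom deg (sum_list (map (hdeg deg) xs) + m) (chain0 bb xs y)"
  using assms(2)
proof (induction xs)
  case Nil then show ?case using assms by simp
next
  case (Cons x xs)
  then have "hom deg (hdeg deg x) x" using hom_hdeg by auto
  from hom_bul[OF ps this Cons.IH[OF _]] Cons.prems show ?case by (simp add: add.assoc)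
qed

primrec dc :: "(nat \<Rightarrow> 'b \<Rightarrow> 'b \<Rightarrow> ('b \<Rightarrow>\<^sub>0 'k::field)) \<Rightarrow> ('b \<Rightarrow>\<^sub>0 'k) list \<Rightarrow> ('b \<Rightarrow>\<^sub>0 'k) \<Rightarrow> ('b \<times> 'b \<Rightarrow>\<^sub>0 'k)" where
  "dc bb [] y = 0"
| "dc bb (x # xs) y = tens x (chain0 bb xs y) + lin_ext (\<lambda>(c, d). tens (bul bb 0 x (bas c)) (bas d)) (dc bb xs y)"

lemma dc_keys:
  assumes ps: "preshuffle_bialgebra deg bb cop" and "\<forall>x\<in>set xs. \<exists>n. hom deg n x"
  shows "\<forall>k\<in>Poly_Mapping.keys (dc bb xs y). deg (fst k) \<le> sum_list (map (hdeg deg) xs)"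
  using assms(2)
proof (induction xs)
  case Nil then show ?case by simp
next
  case (Cons x xs)
  have hx: "hom deg (hdeg deg x) x" using Cons.prems hom_hdeg by auto
  show ?case
  proof
    fix k assume "k \<in> Poly_Mapping.keys (dc bb (x # xs) y)"
    then have "k \<in> Poly_Mapping.keys (tens x (chain0 bb xs y)) \<or>
       k \<in> Poly_Mapping.keys (lin_ext (\<lambda>(c, d). tens (bul bb 0 x (bas c)) (bas d)) (dc bb xs y))"
      using keys_add by fastforce
    then show "deg (fst k) \<le> sum_list (map (hdeg deg) (x # xs))"
    proof
      assume "k \<in> Poly_Mapping.keys (tens x (chain0 bb xs y))"
      then have "fst k \<in> Poly_Mapping.keys x" using keys_tens by fastforce
      then show ?thesis using hx by (auto simp: hom_def)
    next
      assume "k \<in> Poly_Mapping.keys (lin_ext (\<lambda>(c, d). tens (bul bb 0 x (bas c)) (bas d)) (dc bb xs y))"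
      then obtain c d where cd: "(c, d) \<in> Poly_Mapping.keys (dc bb xs y)"
        and k: "k \<in> Poly_Mapping.keys (tens (bul bb 0 x (bas c)) (bas d))"
        using keys_lin_ext by fastforce
      have "fst k \<in> Poly_Mapping.keys (bul bb 0 x (bas c))" using k keys_tens by fastforce
      moreover have "hom deg (hdeg deg x + deg c) (bul bb 0 x (bas c))"
        using hom_bul[OF ps hx hom_bas] by simp
      ultimately have "deg (fst k) = hdeg deg x + deg c" by (auto simp: hom_def)
      moreover have "deg c \<le> sum_list (map (hdeg deg) xs)" using Cons cd by fastforce
      ultimately show ?thesis by simp
    qed
  qed
qed

lemma Delta_chain:
  assumes ps: "preshuffle_bialgebra deg bb cop"
    and xs: "\<forall>x\<in>set xs. (\<exists>n. hom deg n x) \<and> Delta cop x = 0"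
    and y: "hom deg m y" "Delta cop y = 0"
  shows "Delta cop (chain0 bb xs y) = dc bb xs y"
  using xs
proof (induction xs)
  case Nil then show ?case using y by simp
next
  case (Cons x xs)
  have hx: "hom deg (hdeg deg x) x" using Cons.prems hom_hdeg by auto
  have hw: "hom deg (sum_list (map (hdeg deg) xs) + m) (chain0 bb xs y)"
    using hom_chain[OF ps _ y(1)] Cons.prems by auto
  have "Delta cop (bul bb 0 x (chain0 bb xs y)) =
          lin_ext (\<lambda>(a, b). tens (bas a) (bul bb 0 (bas b) (chain0 bb xs y))) (Delta cop x)
          + tens x (chain0 bb xs y)
          + lin_ext (\<lambda>(c, d). tens (bul bb 0 x (bas c)) (bas d)) (Delta cop (chain0 bb xs y))"
    using ps hx hw unfolding preshuffle_bialgebra_def by blast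
  then show ?case using Cons by simp
qed



definition F1 :: "('b \<Rightarrow> nat) \<Rightarrow> (nat \<Rightarrow> 'b \<Rightarrow> 'b \<Rightarrow> ('b \<Rightarrow>\<^sub>0 'k::field)) \<Rightarrow> ('b \<Rightarrow>\<^sub>0 'k) \<Rightarrow> nat \<Rightarrow> 'b \<times> 'b \<Rightarrow> ('b \<times> 'b \<Rightarrow>\<^sub>0 'k)" where
  "F1 deg bb z i = (\<lambda>(c, d). if deg c \<le> i then tens (bas c) (bul bb (i - deg c) z (bas d)) else 0)"

lemma Delta_main:
  assumes ps: "preshuffle_bialgebra deg bb cop"
    and xs: "\<forall>x\<in>set xs. (\<exists>n. hom deg n x) \<and> Delta cop x = 0"
    and y: "hom deg m y" "Delta cop y = 0"
    and z: "hom deg l z" "Delta cop z = 0"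
    and p: "1 \<le> p" "p \<le> hdeg deg y"
  shows "Delta cop (bul bb (p + sum_list (map (hdeg deg) xs)) z (chain0 bb xs y)) =
    lin_ext (F1 deg bb z (p + sum_list (map (hdeg deg) xs))) (dc bb xs y)
    + (if p = hdeg deg y then tens (chain0 bb xs y) z else 0)"
proof -
  let ?N = "sum_list (map (hdeg deg) xs)"
  let ?W = "chain0 bb xs y"
  let ?i = "p + ?N"
  have hy: "hom deg (hdeg deg y) y" using y hom_hdeg by auto
  have hz: "hom deg (hdeg deg z) z" using z hom_hdeg by auto
  have hW: "hom deg (?N + hdeg deg y) ?W" using hom_chain[OF ps _ hy] xs by auto
  have DW: "Delta cop ?W = dc bb xs y" using Delta_chain[OF ps xs y] .
  have kk: "\<forall>k\<in>Poly_Mapping.keys (dc bb xs y). deg (fst k) \<le> ?N"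
    using dc_keys[OF ps] xs by auto
  show ?thesis
  proof (cases "p = hdeg deg y")
    case False
    then have i: "1 \<le> ?i" "?i \<le> (?N + hdeg deg y) - 1" using p by auto
    have "Delta cop (bul bb ?i z ?W) =
          lin_ext (\<lambda>(c, d). if deg c \<le> ?i then tens (bas c) (bul bb (?i - deg c) z (bas d)) else 0)
            (Delta cop ?W)
          + lin_ext (\<lambda>(a, b). lin_ext (\<lambda>(c, d).
                if deg c = ?i then tens (bul bb ?i (bas a) (bas c)) (bul bb 0 (bas b) (bas d)) else 0)
              (Delta cop ?W)) (Delta cop z)
          + lin_ext (\<lambda>(c, d). if ?i \<le> deg c then tens (bul bb ?i z (bas c)) (bas d) else 0)
            (Delta cop ?W)"
      using ps hz hW i unfolding preshuffle_bialgebra_def by blast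
    also have "lin_ext (\<lambda>(c, d). if ?i \<le> deg c then tens (bul bb ?i z (bas c)) (bas d) else 0)
            (Delta cop ?W) = lin_ext (\<lambda>_. 0) (dc bb xs y)"
      unfolding DW
    proof (rule lin_ext_cong)
      fix k assume "k \<in> Poly_Mapping.keys (dc bb xs y)"
      then have "deg (fst k) \<le> ?N" using kk by auto
      then show "(case k of (c, d) \<Rightarrow> if ?i \<le> deg c then tens (bul bb ?i z (bas c)) (bas d) else 0) = 0"
        using p by (cases k) auto
    qed
    finally show ?thesis using False z DW by (simp add: lin_ext_zero_fun F1_def)
  next
    case True
    have "Delta cop (bul bb (?N + hdeg deg y) z ?W) =
          lin_ext (\<lambda>(c, d). tens (bas c) (bul bb (deg d) z (bas d))) (Delta cop ?W)
          + tens ?W z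
          + lin_ext (\<lambda>(a, b). tens (bul bb (?N + hdeg deg y) (bas a) ?W) (bas b)) (Delta cop z)"
      using ps hz hW unfolding preshuffle_bialgebra_def by blast
    also have "lin_ext (\<lambda>(c, d). tens (bas c) (bul bb (deg d) z (bas d))) (Delta cop ?W)
       = lin_ext (F1 deg bb z ?i) (Delta cop ?W)"
    proof (rule lin_ext_cong)
      fix k assume k: "k \<in> Poly_Mapping.keys (Delta cop ?W)"
      obtain c d where kcd: "k = (c, d)" by (cases k)
      from k obtain b where b: "b \<in> Poly_Mapping.keys ?W" "(c, d) \<in> Poly_Mapping.keys (cop b)"
        unfolding Delta_def kcd using keys_lin_ext by fastforce
      have "deg b = ?N + hdeg deg y" using b hW by (auto simp: hom_def)
      moreover have "deg c + deg d = deg b" using ps b unfolding preshuffle_bialgebra_def by blast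
      moreover have "deg c \<le> ?N" using kk k kcd DW by auto
      ultimately have e: "?i - deg c = deg d" "deg c \<le> ?i" using True by auto
      show "(case k of (c, d) \<Rightarrow> tens (bas c) (bul bb (deg d) z (bas d))) = F1 deg bb z ?i k"
        using e by (simp add: kcd F1_def)
    qed
    finally show ?thesis using True z DW by (simp add: add.commute)
  qed
qed


lemma F1_step:
  assumes ps: "preshuffle_bialgebra deg bb cop"
    and hx: "hom deg (hdeg deg x) x"
    and xs: "\<forall>x\<in>set xs. \<exists>n. hom deg n x"
    and iN: "sum_list (map (hdeg deg) xs) \<le> i"
  shows "lin_ext (F1 deg bb z (i + hdeg deg x)) (dc bb (x # xs) y) =
     tens x (bul bb i z (chain0 bb xs y))
     + lin_ext (\<lambda>(c, d). tens (bul bb 0 x (bas c)) (bas d)) (lin_ext (F1 deg bb z i) (dc bb xs y))"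
proof -
  let ?h = "hdeg deg x"
  let ?w = "chain0 bb xs y"
  let ?G0 = "\<lambda>(c, d). tens (bul bb 0 x (bas c)) (bas d)"
  have A: "lin_ext (F1 deg bb z (i + ?h)) (tens x ?w) = tens x (bul bb i z ?w)"
  proof -
    have "lin_ext (F1 deg bb z (i + ?h)) (tens x ?w) = lin_ext (\<lambda>(c, d). tens (bas c) (bul bb i z (bas d))) (tens x ?w)"
    proof (rule lin_ext_cong)
      fix k assume "k \<in> Poly_Mapping.keys (tens x ?w)"
      then have "fst k \<in> Poly_Mapping.keys x" using keys_tens by fastforce
      then have "deg (fst k) = ?h" using hx by (auto simp: hom_def)
      then show "F1 deg bb z (i + ?h) k = (\<lambda>(c, d). tens (bas c) (bul bb i z (bas d))) k"
        by (cases k) (simp add: F1_def)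
    qed
    also have "\<dots> = tens x (bul bb i z ?w)"
      using tens_lin_ext[of "\<lambda>c. bas c" "\<lambda>d. bul bb i z (bas d)" x ?w] by (simp add: bul_lin2)
    finally show ?thesis .
  qed
  have kk: "\<forall>k\<in>Poly_Mapping.keys (dc bb xs y). deg (fst k) \<le> sum_list (map (hdeg deg) xs)"
    using dc_keys[OF ps xs] by auto
  have B: "lin_ext (F1 deg bb z (i + ?h)) (lin_ext ?G0 (dc bb xs y))
      = lin_ext ?G0 (lin_ext (F1 deg bb z i) (dc bb xs y))"
    unfolding lin_ext_comp
  proof (rule lin_ext_cong)
    fix k assume k: "k \<in> Poly_Mapping.keys (dc bb xs y)"
    obtain c d where kcd: "k = (c, d)" by (cases k)
    have dc: "deg c \<le> i" using kk k iN kcd by fastforce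
    have hb: "hom deg (?h + deg c) (bul bb 0 x (bas c))" using hom_bul[OF ps hx hom_bas] by simp
    have "lin_ext (F1 deg bb z (i + ?h)) (tens (bul bb 0 x (bas c)) (bas d))
       = lin_ext (\<lambda>(c', d'). tens (bas c') (bul bb (i - deg c) z (bas d'))) (tens (bul bb 0 x (bas c)) (bas d))"
    proof (rule lin_ext_cong)
      fix k' assume "k' \<in> Poly_Mapping.keys (tens (bul bb 0 x (bas c)) (bas d))"
      then have "fst k' \<in> Poly_Mapping.keys (bul bb 0 x (bas c))" using keys_tens by fastforce
      then have "deg (fst k') = ?h + deg c" using hb by (auto simp: hom_def)
      then show "F1 deg bb z (i + ?h) k' = (\<lambda>(c', d'). tens (bas c') (bul bb (i - deg c) z (bas d'))) k'"
        using dc by (cases k') (simp add: F1_def)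
    qed
    also have "\<dots> = tens (bul bb 0 x (bas c)) (bul bb (i - deg c) z (bas d))"
      using tens_lin_ext[of "\<lambda>c. bas c" "\<lambda>d. bul bb (i - deg c) z (bas d)" "bul bb 0 x (bas c)" "bas d"] by simp
    also have "\<dots> = lin_ext ?G0 (F1 deg bb z i k)"
      using dc tens_lin_ext[of "\<lambda>c. bul bb 0 x (bas c)" "\<lambda>d. bas d" "bas c" "bul bb (i - deg c) z (bas d)"] by (simp add: kcd F1_def)
    finally show "lin_ext (F1 deg bb z (i + ?h)) (?G0 k) = lin_ext ?G0 (F1 deg bb z i k)"
      by (simp add: kcd)
  qed
  show ?thesis by (simp add: lin_ext_add A B)
qed


theorem mainTheorem18:
  fixes deg :: "'b \<Rightarrow> nat"
    and bb :: "nat \<Rightarrow> 'b \<Rightarrow> 'b \<Rightarrow> ('b \<Rightarrow>\<^sub>0 'k::field)"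
    and cop :: "'b \<Rightarrow> ('b \<times> 'b \<Rightarrow>\<^sub>0 'k)"
    and xs :: "('b \<Rightarrow>\<^sub>0 'k) list"
    and y z :: "'b \<Rightarrow>\<^sub>0 'k"
    and p :: nat
  assumes "preshuffle_bialgebra deg bb cop"
    and "\<forall>x\<in>set xs. (\<exists>n. hom deg n x) \<and> Delta cop x = 0"
    and "\<exists>n. hom deg n y" and "Delta cop y = 0"
    and "\<exists>n. hom deg n z" and "Delta cop z = 0"
    and "1 \<le> p" and "p \<le> hdeg deg y"
  shows "Delta cop (Lop deg bb p xs y z) = 0"
proof -
  note ps = assms(1)
  note xsa = assms(2)
  obtain m where hy0: "hom deg m y" using assms(3) by blast
  obtain l where hz0: "hom deg l z" using assms(5) by blast
  have hy: "hom deg (hdeg deg y) y" using hy0 hom_hdeg by auto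
  have hz: "hom deg (hdeg deg z) z" using hz0 hom_hdeg by auto
  note yD = assms(4) and zD = assms(6) and p = assms(7,8)
  show ?thesis
  proof (cases xs)
    case Nil
    have D1: "Delta cop (bul bb p z y) = (if p = hdeg deg y then tens y z else 0)"
      using Delta_main[OF ps _ hy yD hz zD p, of "[]"] by simp
    have D2: "Delta cop (bul bb 0 y z) =
          lin_ext (\<lambda>(a, b). tens (bas a) (bul bb 0 (bas b) z)) (Delta cop y)
          + tens y z
          + lin_ext (\<lambda>(c, d). tens (bul bb 0 y (bas c)) (bas d)) (Delta cop z)"
      using ps hy hz unfolding preshuffle_bialgebra_def by blast
    show ?thesis
      using D1 D2 yD zD by (cases "p = hdeg deg y") (simp_all add: Nil Lop_def Delta_minus)
  next
    case (Cons x xs')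
    let ?N = "sum_list (map (hdeg deg) xs')"
    let ?w = "chain0 bb xs' y"
    let ?V = "bul bb (p + ?N) z ?w"
    let ?G0 = "\<lambda>(c, d). tens (bul bb 0 x (bas c)) (bas d)"
    have xs': "\<forall>x\<in>set xs'. (\<exists>n. hom deg n x) \<and> Delta cop x = 0" using xsa Cons by auto
    have hx: "hom deg (hdeg deg x) x" and xD: "Delta cop x = 0" using xsa Cons hom_hdeg by auto
    have T1: "Delta cop (bul bb (p + sum_list (map (hdeg deg) xs)) z (chain0 bb xs y)) =
       lin_ext (F1 deg bb z (p + sum_list (map (hdeg deg) xs))) (dc bb xs y)
       + (if p = hdeg deg y then tens (chain0 bb xs y) z else 0)"
      using Delta_main[OF ps xsa hy yD hz zD p] .
    have e: "p + sum_list (map (hdeg deg) xs) = (p + ?N) + hdeg deg x" using Cons by simp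
    have S: "lin_ext (F1 deg bb z (p + sum_list (map (hdeg deg) xs))) (dc bb xs y) =
       tens x ?V + lin_ext ?G0 (lin_ext (F1 deg bb z (p + ?N)) (dc bb xs' y))"
    proof -
      have pre: "\<forall>x\<in>set xs'. \<exists>n. hom deg n x" using xs' by auto
      have st: "lin_ext (F1 deg bb z ((p + ?N) + hdeg deg x)) (dc bb (x # xs') y) =
     tens x (bul bb (p + ?N) z (chain0 bb xs' y))
     + lin_ext (\<lambda>(c, d). tens (bul bb 0 x (bas c)) (bas d)) (lin_ext (F1 deg bb z (p + ?N)) (dc bb xs' y))"
        by (rule F1_step[OF ps hx pre]) simp
      have fF: "F1 deg bb z (p + sum_list (map (hdeg deg) xs)) = F1 deg bb z (p + ?N + hdeg deg x)"
        using e by (simp add: add.assoc)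
      show ?thesis unfolding fF unfolding Cons using st .
    qed
    have V: "Delta cop ?V = lin_ext (F1 deg bb z (p + ?N)) (dc bb xs' y)
       + (if p = hdeg deg y then tens ?w z else 0)"
      using Delta_main[OF ps xs' hy yD hz zD p] .
    have hw: "hom deg (?N + hdeg deg y) ?w" using hom_chain[OF ps _ hy] xs' by auto
    have hV: "hom deg (hdeg deg z + (?N + hdeg deg y)) ?V"
      using hom_bul[OF ps hz hw] p by auto
    have T2: "Delta cop (bul bb 0 x ?V) =
          lin_ext (\<lambda>(a, b). tens (bas a) (bul bb 0 (bas b) ?V)) (Delta cop x)
          + tens x ?V
          + lin_ext ?G0 (Delta cop ?V)"
      using ps hx hV unfolding preshuffle_bialgebra_def by blast
    have E: "lin_ext ?G0 (tens ?w z) = tens (bul bb 0 x ?w) z"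
      using tens_lin_ext[of "\<lambda>c. bul bb 0 x (bas c)" "\<lambda>d. bas d" ?w z] by (simp add: bul_lin2)
    have "Delta cop (Lop deg bb p xs y z) =
      Delta cop (bul bb (p + sum_list (map (hdeg deg) xs)) z (chain0 bb xs y)) - Delta cop (bul bb 0 x ?V)"
      by (simp add: Lop_def Cons Delta_minus)
    also have "\<dots> = 0"
      unfolding T1 T2 S V xD using E by (simp add: lin_ext_add Cons)
    finally show ?thesis .
  qed
qed

end
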